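(* For every integer $g\ge1$, there are at most $2^{g-1}$ numerical semigroups of genus $g$.
   Context: A numerical semigroup is a submonoid $S$ of $(\mathbb N,+)$ with finite complement; its genus is $\#(\mathbb N\setminus S)$. *)

theory Defs
  imports Main
begin

definition numerical_semigroup :: "nat set \<Rightarrow> bool" where
  "numerical_semigroup S \<longleftrightarrow>
     0 \<in> S \<and> (\<forall>a\<in>S. \<forall>b\<in>S. a + b \<in> S) \<and> finite (UNIV - S)"

definition genus :: "nat set \<Rightarrow> nat" where
  "genus S = card (UNIV - S)"

end

theory Submission
  imports Defs
begin

definition comps :: "nat \<Rightarrow> nat list set" where
  "comps g = {xs. (\<forall>x\<in>set xs. x \<ge> 1) \<and> sum_list xs = g}"

lemma comps_bound: "finite (comps (Suc n)) \<and> card (comps (Suc n)) \<le> 2 ^ n"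
proof (induction n)
  case 0
  have "comps (Suc 0) \<subseteq> {[1]}"
  proof
    fix xs assume "xs \<in> comps (Suc 0)"
    then have a: "\<forall>x\<in>set xs. x \<ge> 1" "sum_list xs = 1" by (auto simp: comps_def)
    then obtain k ys where xs: "xs = k # ys" by (cases xs) auto
    have "k \<ge> 1" "k + sum_list ys = 1" using a xs by auto
    then have "k = 1" "sum_list ys = 0" by arith+
    have yall: "\<forall>y\<in>set ys. y \<ge> 1" using a xs by simp
    have "ys = []"
    proof (cases ys)
      case (Cons y zs)
      then have "y \<ge> 1" using yall by simp
      moreover have "y + sum_list zs = 0" using Cons \<open>sum_list ys = 0\<close> by simp
      ultimately show ?thesis by simp
    qed simp
    with xs \<open>k = 1\<close> show "xs \<in> {[1]}" by simp
  qed
  moreover have "finite {[1::nat]}" by simp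
  ultimately have "card (comps (Suc 0)) \<le> card {[1::nat]}" "finite (comps (Suc 0))"
    using card_mono finite_subset by blast+
  then show ?case by simp
next
  case (Suc n)
  let ?inc = "\<lambda>xs::nat list. Suc (hd xs) # tl xs"
  have sub: "comps (Suc (Suc n)) \<subseteq> (Cons 1) ` comps (Suc n) \<union> ?inc ` comps (Suc n)"
  proof
    fix xs assume "xs \<in> comps (Suc (Suc n))"
    then have a: "\<forall>x\<in>set xs. x \<ge> 1" "sum_list xs = Suc (Suc n)" by (auto simp: comps_def)
    then obtain k ys where xs: "xs = k # ys" by (cases xs) auto
    show "xs \<in> (Cons 1) ` comps (Suc n) \<union> ?inc ` comps (Suc n)"
    proof (cases "k = 1")
      case True
      then have "ys \<in> comps (Suc n)" using a xs by (auto simp: comps_def)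
      then show ?thesis using xs True by auto
    next
      case False
      then have "(k - 1) # ys \<in> comps (Suc n)" using a xs by (auto simp: comps_def)
      moreover have "xs = ?inc ((k - 1) # ys)" using xs False a by auto
      ultimately show ?thesis by blast
    qed
  qed
  have fin: "finite (comps (Suc n))" using Suc by simp
  have "card (comps (Suc (Suc n))) \<le> card ((Cons 1) ` comps (Suc n) \<union> ?inc ` comps (Suc n))"
    using sub fin by (intro card_mono) auto
  also have "\<dots> \<le> card ((Cons 1) ` comps (Suc n)) + card (?inc ` comps (Suc n))"
    by (rule card_Un_le)
  also have "\<dots> \<le> card (comps (Suc n)) + card (comps (Suc n))"
    by (intro add_mono card_image_le fin)
  also have "\<dots> \<le> 2 ^ Suc n" using Suc by simp
  finally show ?case using sub fin finite_subset by blast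
qed

lemma ns_add: "numerical_semigroup S \<Longrightarrow> a \<in> S \<Longrightarrow> b \<in> S \<Longrightarrow> a + b \<in> S"
  by (simp add: numerical_semigroup_def)

lemma ns_zero: "numerical_semigroup S \<Longrightarrow> 0 \<in> S"
  by (simp add: numerical_semigroup_def)

lemma ns_fin: "numerical_semigroup S \<Longrightarrow> finite (UNIV - S)"
  by (simp add: numerical_semigroup_def)

lemma ns_addk: "numerical_semigroup S \<Longrightarrow> a \<in> S \<Longrightarrow> x \<in> S \<Longrightarrow> x + k * a \<in> S"
proof (induction k)
  case 0 then show ?case by simp
next
  case (Suc k)
  then have "x + k * a \<in> S" by simp
  then have "(x + k * a) + a \<in> S" using ns_add Suc.prems by blast
  then show ?case by (simp add: algebra_simps)
qed

lemma ns_pos_ex: assumes "numerical_semigroup S" shows "\<exists>x. x \<in> S \<and> 0 < x"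
proof (rule ccontr)
  assume "\<not> ?thesis"
  then have "UNIV - {0} \<subseteq> UNIV - S" by auto
  then have "finite (UNIV - {0::nat})" using ns_fin[OF assms] finite_subset by blast
  then show False by simp
qed

definition mult :: "nat set \<Rightarrow> nat" where
  "mult S = (LEAST x. x \<in> S \<and> 0 < x)"

definition cnt :: "nat set \<Rightarrow> nat \<Rightarrow> nat" where
  "cnt S i = card {x. x \<notin> S \<and> x mod mult S = i}"

definition code :: "nat set \<Rightarrow> nat list" where
  "code S = map (cnt S) [1..<mult S]"

lemma mult_props:
  assumes "numerical_semigroup S"
  shows "mult S \<in> S" "0 < mult S" "\<And>x. 0 < x \<Longrightarrow> x < mult S \<Longrightarrow> x \<notin> S"
proof -
  have "mult S \<in> S \<and> 0 < mult S" unfolding mult_def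
    using ns_pos_ex[OF assms] by (rule LeastI_ex)
  then show "mult S \<in> S" "0 < mult S" by auto
  show "\<And>x. 0 < x \<Longrightarrow> x < mult S \<Longrightarrow> x \<notin> S"
    unfolding mult_def using not_less_Least by blast
qed

lemma down_closed:
  fixes D :: "nat set"
  assumes "finite D" "\<And>j j'. j \<in> D \<Longrightarrow> j' < j \<Longrightarrow> j' \<in> D"
  shows "D = {..<card D}"
proof -
  have ex: "\<exists>k. k \<notin> D" using assms(1) by (meson ex_new_if_finite infinite_UNIV_nat)
  define n where "n = (LEAST k. k \<notin> D)"
  have "n \<notin> D" unfolding n_def using ex by (rule LeastI_ex)
  have "{..<n} \<subseteq> D" unfolding n_def using not_less_Least by blast
  moreover have "D \<subseteq> {..<n}"
  proof
    fix j assume "j \<in> D"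
    show "j \<in> {..<n}"
    proof (rule ccontr)
      assume "j \<notin> {..<n}"
      then have "n < j \<or> n = j" by auto
      then show False using assms(2)[OF \<open>j \<in> D\<close>] \<open>n \<notin> D\<close> \<open>j \<in> D\<close> by auto
    qed
  qed
  ultimately have "D = {..<n}" by auto
  then show ?thesis by simp
qed

lemma residue_class:
  assumes S: "numerical_semigroup S" and i: "0 < i" "i < mult S"
  shows "{x. x \<notin> S \<and> x mod mult S = i} = {x. x mod mult S = i \<and> x div mult S < cnt S i}"
proof -
  let ?m = "mult S"
  have m: "?m \<in> S" "0 < ?m" using mult_props[OF S] by auto
  define D where "D = {j. i + j * ?m \<notin> S}"
  let ?f = "\<lambda>j. i + j * ?m"
  have inj: "inj ?f" by (rule injI) (use m in auto)
  have A: "{x. x \<notin> S \<and> x mod ?m = i} = ?f ` D"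
  proof (intro set_eqI iffI)
    fix x assume x: "x \<in> {x. x \<notin> S \<and> x mod ?m = i}"
    then have "x = ?f (x div ?m)" using mod_div_mult_eq[of x ?m] by simp
    moreover have "x div ?m \<in> D" using x calculation unfolding D_def by simp
    ultimately show "x \<in> ?f ` D" by (rule image_eqI)
  next
    fix x assume "x \<in> ?f ` D"
    then obtain j where "x = ?f j" "?f j \<notin> S" unfolding D_def by auto
    then show "x \<in> {x. x \<notin> S \<and> x mod ?m = i}" using i by auto
  qed
  have "?f ` D \<subseteq> UNIV - S" unfolding D_def by auto
  then have "finite (?f ` D)" using ns_fin[OF S] finite_subset by blast
  then have finD: "finite D" using inj finite_imageD inj_on_subset by blast
  have cardeq: "cnt S i = card D" unfolding cnt_def A
    using card_image inj inj_on_subset by blast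
  have "D = {..<card D}"
  proof (rule down_closed[OF finD])
    fix j j' assume "j \<in> D" "j' < j"
    show "j' \<in> D"
    proof (rule ccontr)
      assume "j' \<notin> D"
      then have "?f j' \<in> S" unfolding D_def by simp
      then have "?f j' + (j - j') * ?m \<in> S" by (rule ns_addk[OF S m(1)])
      moreover have "?f j' + (j - j') * ?m = ?f j" using \<open>j' < j\<close>
      proof -
        obtain d where "j = j' + d" using \<open>j' < j\<close> less_imp_add_positive by blast
        then show ?thesis by (simp add: algebra_simps)
      qed
      ultimately show False using \<open>j \<in> D\<close> unfolding D_def by simp
    qed
  qed
  then have "D = {..<cnt S i}" using cardeq by simp
  show ?thesis
  proof (intro set_eqI iffI)
    fix x assume x: "x \<in> {x. x \<notin> S \<and> x mod ?m = i}"
    have "?f (x div ?m) = x" using x mod_div_mult_eq[of x ?m] by simp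
    then have "x div ?m \<in> D" using x unfolding D_def by simp
    then show "x \<in> {x. x mod ?m = i \<and> x div ?m < cnt S i}" using x \<open>D = {..<cnt S i}\<close> by auto
  next
    fix x assume x: "x \<in> {x. x mod ?m = i \<and> x div ?m < cnt S i}"
    then have "x div ?m \<in> D" using \<open>D = {..<cnt S i}\<close> by auto
    then have "?f (x div ?m) \<notin> S" unfolding D_def by simp
    moreover have "?f (x div ?m) = x" using x mod_div_mult_eq[of x ?m] by simp
    ultimately show "x \<in> {x. x \<notin> S \<and> x mod ?m = i}" using x by simp
  qed
qed

lemma gap_iff:
  assumes S: "numerical_semigroup S"
  shows "x \<notin> S \<longleftrightarrow> x mod mult S \<noteq> 0 \<and> x div mult S < cnt S (x mod mult S)"
proof (cases "x mod mult S = 0")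
  case True
  have "0 + (x div mult S) * mult S \<in> S"
    by (rule ns_addk[OF S mult_props(1)[OF S] ns_zero[OF S]])
  moreover have "x = (x div mult S) * mult S" using True mod_div_mult_eq[of x "mult S"] by simp
  ultimately show ?thesis using True by simp
next
  case False
  have lt: "x mod mult S < mult S" using mult_props(2)[OF S] by simp
  have eq: "{y. y \<notin> S \<and> y mod mult S = x mod mult S} =
        {y. y mod mult S = x mod mult S \<and> y div mult S < cnt S (x mod mult S)}"
    using residue_class[OF S _ lt] False by simp
  show ?thesis using eq[THEN eqset_imp_iff, of x] False by simp
qed

lemma cnt0: assumes S: "numerical_semigroup S" shows "cnt S 0 = 0"
proof -
  have "{x. x \<notin> S \<and> x mod mult S = 0} = {}" using gap_iff[OF S] by auto
  then show ?thesis unfolding cnt_def by (metis card.empty)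
qed

lemma code_sum:
  assumes S: "numerical_semigroup S"
  shows "sum_list (code S) = genus S"
proof -
  let ?m = "mult S"
  let ?A = "\<lambda>i. {x. x \<notin> S \<and> x mod ?m = i}"
  have m0: "0 < ?m" using mult_props[OF S] by simp
  have U: "UNIV - S = (\<Union>i\<in>{..<?m}. ?A i)" using m0 by auto
  have fin: "\<forall>i\<in>{..<?m}. finite (?A i)"
    using ns_fin[OF S] by (auto intro: finite_subset[of _ "UNIV - S"])
  have "genus S = (\<Sum>i<?m. card (?A i))" unfolding genus_def U
    by (rule card_UN_disjoint) (use fin in auto)
  also have "\<dots> = (\<Sum>i<?m. cnt S i)" unfolding cnt_def by simp
  also have "\<dots> = (\<Sum>i\<in>{0..<?m}. cnt S i)" by (simp add: atLeast0LessThan)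
  also have "\<dots> = cnt S 0 + (\<Sum>i\<in>{Suc 0..<?m}. cnt S i)"
    using m0 by (rule sum.atLeast_Suc_lessThan)
  also have "\<dots> = (\<Sum>i\<in>{1..<?m}. cnt S i)" using cnt0[OF S] by simp
  also have "\<dots> = sum_list (code S)" unfolding code_def
    using sum_set_upt_conv_sum_list_nat[of "cnt S" 1 ?m] by simp
  finally show ?thesis by simp
qed

lemma code_pos:
  assumes S: "numerical_semigroup S" and y: "y \<in> set (code S)"
  shows "y \<ge> 1"
proof -
  obtain i where i: "1 \<le> i" "i < mult S" "y = cnt S i" using y unfolding code_def by auto
  have "i \<in> {x. x \<notin> S \<and> x mod mult S = i}" using i mult_props(3)[OF S, of i] by auto
  moreover have "finite {x. x \<notin> S \<and> x mod mult S = i}"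
    using ns_fin[OF S] by (auto intro: finite_subset[of _ "UNIV - S"])
  ultimately have "card {x. x \<notin> S \<and> x mod mult S = i} > 0" by (auto simp: card_gt_0_iff)
  then show ?thesis using i unfolding cnt_def by simp
qed

lemma code_inj:
  assumes S: "numerical_semigroup S" and T: "numerical_semigroup T" and eq: "code S = code T"
  shows "S = T"
proof -
  have "length (code S) = length (code T)" using eq by simp
  then have "mult S - 1 = mult T - 1" unfolding code_def by simp
  then have mm: "mult S = mult T" using mult_props(2)[OF S] mult_props(2)[OF T] by arith
  have cc: "cnt S i = cnt T i" if "0 < i" "i < mult S" for i
  proof -
    have "code S ! (i - 1) = cnt S i" unfolding code_def using that by simp
    moreover have "code T ! (i - 1) = cnt T i" unfolding code_def using that mm by simp
    ultimately show ?thesis using eq by simp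
  qed
  have "x \<in> S \<longleftrightarrow> x \<in> T" for x
  proof -
    have lt: "x mod mult S < mult S" using mult_props(2)[OF S] by simp
    show ?thesis
      using gap_iff[OF S, of x] gap_iff[OF T, of x] mm cc[OF _ lt] by auto
  qed
  then show ?thesis by auto
qed

theorem corollary2p2:
  fixes g :: nat
  assumes "g \<ge> 1"
  shows "finite {S. numerical_semigroup S \<and> genus S = g} \<and>
         card {S. numerical_semigroup S \<and> genus S = g} \<le> 2 ^ (g - 1)"
proof -
  let ?A = "{S. numerical_semigroup S \<and> genus S = g}"
  have gg: "g = Suc (g - 1)" using assms by simp
  have sub: "code ` ?A \<subseteq> comps g"
    using code_sum code_pos unfolding comps_def by auto
  have inj: "inj_on code ?A" by (rule inj_onI) (use code_inj in auto)
  have cb: "finite (comps g) \<and> card (comps g) \<le> 2 ^ (g - 1)"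
    using comps_bound[of "g - 1"] gg by simp
  then have "finite (code ` ?A)" using sub finite_subset by blast
  then have fA: "finite ?A" using inj finite_imageD by blast
  have "card ?A = card (code ` ?A)" using inj by (simp add: card_image)
  also have "\<dots> \<le> card (comps g)" using sub cb by (intro card_mono) auto
  finally show ?thesis using fA cb by simp
qed

end
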